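(* Let $X$ be a Hilbert space, $C\subseteq X$ a nonempty subset, $N:C\to S_X$ a mapping, and $r>0$. For $y\in C$ let $B_y$ be the closed ball $B(y-rN(y),r)$, and let $V:=\overline{\operatorname{co}}\big(\bigcup_{y\in C}B_y\big)$ be the closed convex hull of these balls. Then for every $x\in\partial V$ there exists $z_x\in V$ such that the closed ball $B(z_x,r)$ is contained in $V$ and $x\in\partial B(z_x,r)$.
   Context: $S_X$ is the unit sphere of $X$; $B(z,r)$ denotes the closed ball of center $z$ and radius $r$; $\overline{\operatorname{co}}$ denotes the closed convex hull. *)

theory Defs
  imports "HOL-Analysis.Analysis"
begin

end

theory Submission
  imports Defs
begin

lemma parallelogram_mid:
  fixes x p q :: "'a::real_inner"
  shows "(dist p q)^2 = 2*(dist x p)^2 + 2*(dist x q)^2 - 4*(dist x ((1/2) *\<^sub>R p + (1/2) *\<^sub>R q))^2"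
  by (simp add: dist_norm power2_norm_eq_inner inner_diff inner_add algebra_simps inner_commute)

lemma proj_exists:
  fixes S :: "'a::{real_inner,complete_space} set"
  assumes "closed S" "convex S" "S \<noteq> {}"
  shows "\<exists>p\<in>S. \<forall>q\<in>S. dist x p \<le> dist x q"
proof -
  define d where "d = Inf (dist x ` S)"
  have bdd: "bdd_below (dist x ` S)" by (auto intro: bdd_belowI[of _ 0])
  have dle: "\<forall>q\<in>S. d \<le> dist x q" using cInf_lower[OF _ bdd] d_def by auto
  have d0: "d \<ge> 0" unfolding d_def using assms(3) by (intro cInf_greatest) auto
  have "\<forall>n. \<exists>p\<in>S. dist x p < d + inverse (real (Suc n))"
  proof
    fix n
    have "Inf (dist x ` S) < d + inverse (real (Suc n))" using d_def by simp
    then show "\<exists>p\<in>S. dist x p < d + inverse (real (Suc n))"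
      using cInf_less_iff[OF _ bdd] assms(3) by auto
  qed
  then obtain P where P: "\<And>n. P n \<in> S" "\<And>n. dist x (P n) < d + inverse (real (Suc n))"
    by metis
  have key: "(dist (P m) (P n))^2 \<le> 2*((d + inverse (real (Suc m)))^2 - d^2) + 2*((d + inverse (real (Suc n)))^2 - d^2)" for m n
  proof -
    have mS: "(1/2) *\<^sub>R P m + (1/2) *\<^sub>R P n \<in> S"
      by (rule convexD[OF assms(2) P(1) P(1)]) auto
    have "d \<le> dist x ((1/2) *\<^sub>R P m + (1/2) *\<^sub>R P n)" using dle mS by auto
    then have a: "d^2 \<le> (dist x ((1/2) *\<^sub>R P m + (1/2) *\<^sub>R P n))^2" using d0 by (simp add: power_mono)
    have b: "(dist x (P m))^2 \<le> (d + inverse (real (Suc m)))^2" using P(2)[of m] by (simp add: power_mono)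
    have c: "(dist x (P n))^2 \<le> (d + inverse (real (Suc n)))^2" using P(2)[of n] by (simp add: power_mono)
    have lin: "A \<le> 2*(e-dd)+2*(f-dd)" if "A = 2*a+2*b-4*c" "dd \<le> c" "a \<le> e" "b \<le> f" for A a b c dd e f :: real
      using that by argo
    show ?thesis by (rule lin[OF parallelogram_mid[of "P m" "P n" x] a b c])
  qed
  have small: "(d + inverse (real (Suc m)))^2 - d^2 \<le> (2*d+1) * inverse (real (Suc M))" if "m \<ge> M" for m M
  proof -
    define i where "i = inverse (real (Suc m))"
    have i0: "0 \<le> i" "i \<le> 1" unfolding i_def by (auto simp: field_simps)
    have iM: "i \<le> inverse (real (Suc M))" unfolding i_def using that by (simp add: field_simps)
    have "(d + i)^2 - d^2 = 2*d*i + i*i" by (simp add: power2_eq_square algebra_simps)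
    also have "\<dots> \<le> (2*d+1)*i" using i0 d0 by (simp add: algebra_simps mult_left_le)
    also have "\<dots> \<le> (2*d+1) * inverse (real (Suc M))" using iM d0 by (intro mult_left_mono) auto
    finally show ?thesis unfolding i_def .
  qed
  have "Cauchy P"
  proof (rule metric_CauchyI)
    fix e :: real assume e: "0 < e"
    obtain M :: nat where M: "4*(2*d+1)/e^2 < real M" using reals_Archimedean2 by blast
    have "4*(2*d+1) * inverse (real (Suc M)) < e^2"
    proof -
      have "4*(2*d+1) < e^2 * real M" using M e by (simp add: field_simps)
      also have "\<dots> \<le> e^2 * real (Suc M)" using e by simp
      finally show ?thesis by (simp add: field_simps)
    qed
    show "\<exists>M. \<forall>m\<ge>M. \<forall>n\<ge>M. dist (P m) (P n) < e"
    proof (intro exI allI impI)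
      fix m n assume mn: "m \<ge> M" "n \<ge> M"
      have "(dist (P m) (P n))^2 < e^2"
        using key[of m n] small[OF mn(1)] small[OF mn(2)]
          \<open>4*(2*d+1) * inverse (real (Suc M)) < e^2\<close> by argo
      then show "dist (P m) (P n) < e" using e by (meson less_eq_real_def power_less_imp_less_base)
    qed
  qed
  then obtain p where p: "P \<longlonglongrightarrow> p" using Cauchy_convergent_iff convergent_def by blast
  have pS: "p \<in> S" using closed_sequentially[OF assms(1) P(1) p] .
  have lim1: "(\<lambda>n. dist x (P n)) \<longlonglongrightarrow> dist x p" using p by (intro tendsto_intros)
  have lim2: "(\<lambda>n. d + inverse (real (Suc n))) \<longlonglongrightarrow> d + 0"
    by (intro tendsto_intros LIMSEQ_inverse_real_of_nat)
  have "dist x p \<le> d + 0" using lim1 lim2 P(2) by (intro LIMSEQ_le) (auto intro: less_imp_le)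
  then show ?thesis using pS dle by force
qed

theorem claim4p1:
  fixes C :: "'a::{real_inner,complete_space} set"
    and N :: "'a \<Rightarrow> 'a"
    and r :: real
  assumes "C \<noteq> {}"
    and "\<forall>y\<in>C. N y \<in> sphere 0 1"
    and "r > 0"
  shows "\<forall>x \<in> frontier (closure (convex hull (\<Union>y\<in>C. cball (y - r *\<^sub>R N y) r))).
           \<exists>z \<in> closure (convex hull (\<Union>y\<in>C. cball (y - r *\<^sub>R N y) r)).
             cball z r \<subseteq> closure (convex hull (\<Union>y\<in>C. cball (y - r *\<^sub>R N y) r))
             \<and> x \<in> frontier (cball z r)"
proof
  define K where "K = (\<lambda>y. y - r *\<^sub>R N y) ` C"
  define U where "U = (\<Union>y\<in>C. cball (y - r *\<^sub>R N y) r)"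
  define V where "V = closure (convex hull U)"
  define D where "D = closure (convex hull K)"
  fix x assume xF: "x \<in> frontier (closure (convex hull (\<Union>y\<in>C. cball (y - r *\<^sub>R N y) r)))"
  then have xF: "x \<in> frontier V" unfolding V_def U_def .
  have KU: "K \<subseteq> U" unfolding K_def U_def using assms(3) by auto
  have DV: "D \<subseteq> V" unfolding D_def V_def by (intro closure_mono hull_mono KU)
  have Dne: "D \<noteq> {}" unfolding D_def K_def using assms(1) by auto
  have Dcl: "closed D" "convex D" unfolding D_def by (auto intro: convex_closure)
  have ballV: "cball p r \<subseteq> V" if pD: "p \<in> D" for p
  proof
    fix q assume q: "q \<in> cball p r"
    define u where "u = q - p"
    have nu: "norm u \<le> r" using q unfolding u_def by (simp add: dist_norm norm_minus_commute)
    have "convex hull K \<subseteq> {p. p + u \<in> convex hull U}"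
    proof (rule hull_minimal)
      show "K \<subseteq> {p. p + u \<in> convex hull U}"
      proof
        fix k assume "k \<in> K"
        then obtain y where y: "y \<in> C" "k = y - r *\<^sub>R N y" unfolding K_def by auto
        have "k + u \<in> cball (y - r *\<^sub>R N y) r" using y nu by (simp add: dist_norm)
        then have "k + u \<in> U" unfolding U_def using y(1) by blast
        then show "k \<in> {p. p + u \<in> convex hull U}" by (auto intro: hull_inc)
      qed
      have "{p. p + u \<in> convex hull U} = (\<lambda>p. p - u) ` (convex hull U)"
        by (auto simp: image_iff intro!: bexI[where x="_ + u"])
      then show "convex {p. p + u \<in> convex hull U}"
        by (simp add: convex_translation_subtract)
    qed
    moreover have "closed {p. p + u \<in> V}"
    proof -
      have "closed ((\<lambda>p. p + u) -` V)" unfolding V_def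
        by (intro continuous_closed_vimage closed_closure continuous_intros)
      then show ?thesis by (simp add: vimage_def)
    qed
    moreover have "convex hull U \<subseteq> V" unfolding V_def by (rule closure_subset)
    ultimately have "convex hull K \<subseteq> {p. p + u \<in> V}" by blast
    then have "D \<subseteq> {p. p + u \<in> V}" unfolding D_def
      using \<open>closed {p. p + u \<in> V}\<close> by (rule closure_minimal)
    then show "q \<in> V" using pD unfolding u_def by auto
  qed
  define A where "A = convex hull K + cball (0::'a) r"
  have UA: "U \<subseteq> A"
  proof
    fix w assume "w \<in> U"
    then obtain y where y: "y \<in> C" "w \<in> cball (y - r *\<^sub>R N y) r" unfolding U_def by auto
    have "y - r *\<^sub>R N y \<in> convex hull K" unfolding K_def using y(1) by (auto intro: hull_inc)
    moreover have "w - (y - r *\<^sub>R N y) \<in> cball 0 r" using y(2) by (simp add: dist_norm norm_minus_commute)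
    ultimately have "(y - r *\<^sub>R N y) + (w - (y - r *\<^sub>R N y)) \<in> A" unfolding A_def by (rule set_plus_intro)
    then show "w \<in> A" by simp
  qed
  have "convex hull U \<subseteq> A" unfolding A_def
    by (rule hull_minimal[OF UA[unfolded A_def]]) (intro convex_set_plus convex_convex_hull convex_cball)
  then have VA: "V \<subseteq> closure A" unfolding V_def by (rule closure_mono)
  have xV: "x \<in> V" using xF unfolding V_def frontier_def by auto
  have near: "\<exists>h\<in>D. dist x h < r + e" if e: "e > 0" for e
  proof -
    obtain a where a: "a \<in> A" "dist a x < e" using VA xV e closure_approachable by blast
    then obtain h u where hu: "h \<in> convex hull K" "u \<in> cball 0 r" "a = h + u" unfolding A_def
      by (auto elim: set_plus_elim)
    have "dist x h \<le> dist x a + dist a h" by (rule dist_triangle)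
    also have "dist a h = norm u" using hu(3) by (simp add: dist_norm)
    also have "norm u \<le> r" using hu(2) by simp
    finally have "dist x h < r + e" using a(2) by (simp add: dist_commute)
    moreover have "h \<in> D" unfolding D_def using hu(1) closure_subset by blast
    ultimately show ?thesis by blast
  qed
  obtain p where pD: "p \<in> D" and pmin: "\<forall>q\<in>D. dist x p \<le> dist x q"
    using proj_exists[OF Dcl Dne] by blast
  have le: "dist x p \<le> r"
  proof (rule field_le_epsilon)
    fix e :: real assume "e > 0"
    then obtain h where "h \<in> D" "dist x h < r + e" using near by blast
    then show "dist x p \<le> r + e" using pmin by force
  qed
  have eq: "dist x p = r"
  proof (rule ccontr)
    assume "dist x p \<noteq> r"
    then have lt: "dist x p < r" using le by simp
    have "ball x (r - dist x p) \<subseteq> V"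
    proof
      fix w assume "w \<in> ball x (r - dist x p)"
      then have "dist p w \<le> r" using dist_triangle[of p w x] by (simp add: dist_commute)
      then show "w \<in> V" using ballV[OF pD] by auto
    qed
    then have "x \<in> interior V" using lt by (meson centre_in_ball diff_gt_0_iff_gt interior_maximal open_ball subsetD)
    then show False using xF unfolding frontier_def by auto
  qed
  have xfr: "x \<in> frontier (cball p r)"
  proof -
    have "x \<in> closure (cball p r)" using eq by (simp add: dist_commute)
    moreover have "x \<notin> interior (cball p r)"
    proof
      assume xi: "x \<in> interior (cball p r)"
      have "open (interior (cball p r))" by simp
      then obtain e where e0: "e > 0" "ball x e \<subseteq> interior (cball p r)"
        using xi open_contains_ball by blast
      then have e: "e > 0" "ball x e \<subseteq> cball p r" using interior_subset by auto
      define w where "w = x + ((e/2)/r) *\<^sub>R (x - p)"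
      have nxp: "norm (x - p) = r" using eq by (simp add: dist_norm norm_minus_commute)
      have "dist x w = e/2" unfolding w_def using assms(3) e(1) nxp by (simp add: dist_norm)
      then have "w \<in> ball x e" using e(1) by (simp add: dist_commute)
      then have "w \<in> cball p r" using e(2) by blast
      moreover have "w - p = (1 + (e/2)/r) *\<^sub>R (x - p)" unfolding w_def by (simp add: algebra_simps)
      then have "norm (w - p) = (1 + (e/2)/r) * r" using nxp assms(3) e(1) by simp
      then have "dist p w = r + e/2" using assms(3) by (simp add: dist_norm norm_minus_commute algebra_simps)
      ultimately show False using e(1) by simp
    qed
    ultimately show ?thesis unfolding frontier_def by auto
  qed
  show "\<exists>z \<in> closure (convex hull (\<Union>y\<in>C. cball (y - r *\<^sub>R N y) r)).
             cball z r \<subseteq> closure (convex hull (\<Union>y\<in>C. cball (y - r *\<^sub>R N y) r))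
             \<and> x \<in> frontier (cball z r)"
    using pD DV ballV[OF pD] xfr unfolding V_def U_def by blast
qed

end
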